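(* Let $f:\mathbb{R}^n_{>0}\to\mathbb{R}^n_{>0}$ be order-preserving and homogeneous. Then (the continuous extension of) $f$ has an eigenvector $y\in(0,\infty]^n$ with $y_i<\infty$ for some $i\in[n]$ such that $f(y)=\lambda(f)y$.
   Context: Entrywise order. Order-preserving: $x\le y\Rightarrow f(x)\le f(y)$; homogeneous: $f(tx)=tf(x)$ for $t>0$. Such $f$ extends continuously (order topology on extended reals) to an order-preserving homogeneous map $(0,\infty]^n\to(0,\infty]^n$, again denoted $f$, with conventions $c\cdot\infty=\infty$ for $c>0$. $\lambda(f)=\sup_{x\in\mathbb{R}^n_{>0}}\min_if(x)_i/x_i$. *)

theory Defs
  imports "HOL-Analysis.Analysis"
begin

text \<open>Vectors in R^n are modelled as real ^ 'n (the dimension n = CARD('n));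
  vectors in (0,\<infinity>]^n as ereal ^ 'n.\<close>

definition pos_vec :: "real ^ 'n \<Rightarrow> bool" where
  "pos_vec x \<longleftrightarrow> (\<forall>i. 0 < x $ i)"

definition maps_pos :: "(real ^ 'n \<Rightarrow> real ^ 'n) \<Rightarrow> bool" where
  "maps_pos f \<longleftrightarrow> (\<forall>x. pos_vec x \<longrightarrow> pos_vec (f x))"

definition order_preserving :: "(real ^ 'n \<Rightarrow> real ^ 'n) \<Rightarrow> bool" where
  "order_preserving f \<longleftrightarrow>
     (\<forall>x y. pos_vec x \<longrightarrow> pos_vec y \<longrightarrow> (\<forall>i. x $ i \<le> y $ i) \<longrightarrow> (\<forall>i. f x $ i \<le> f y $ i))"

definition homogeneous :: "(real ^ 'n \<Rightarrow> real ^ 'n) \<Rightarrow> bool" where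
  "homogeneous f \<longleftrightarrow> (\<forall>x t. pos_vec x \<longrightarrow> 0 < t \<longrightarrow> f (t *s x) = t *s f x)"

definition cw_lambda :: "(real ^ 'n::finite \<Rightarrow> real ^ 'n) \<Rightarrow> real" where
  "cw_lambda f = Sup {Min (range (\<lambda>i. f x $ i / x $ i)) | x. pos_vec x}"

text \<open>The (continuous, order-preserving) extension of f to (0,\<infinity>]^n:
  each coordinate is the supremum of f over the positive real vectors below the point.
  On positive real vectors this agrees with f, by monotonicity.\<close>
definition ext_map :: "(real ^ 'n \<Rightarrow> real ^ 'n) \<Rightarrow> ereal ^ 'n \<Rightarrow> ereal ^ 'n" where
  "ext_map f y = (\<chi> i. SUP x\<in>{x. pos_vec x \<and> (\<forall>j. ereal (x $ j) \<le> y $ j)}. ereal (f x $ i))"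

end

theory Submission
  imports Defs
begin

locale ophom =
  fixes f :: "real ^ 'n::finite \<Rightarrow> real ^ 'n"
  assumes mp: "maps_pos f" and op: "order_preserving f" and hg: "homogeneous f"
begin

lemma fpos: "pos_vec x \<Longrightarrow> 0 < f x $ i"
  using mp unfolding maps_pos_def pos_vec_def by blast

lemma fmono: "pos_vec x \<Longrightarrow> pos_vec y \<Longrightarrow> (\<And>j. x $ j \<le> y $ j) \<Longrightarrow> f x $ i \<le> f y $ i"
  using op unfolding order_preserving_def by blast

lemma fhom: "pos_vec x \<Longrightarrow> 0 < t \<Longrightarrow> f (t *s x) $ i = t * f x $ i"
  using hg unfolding homogeneous_def by simp

lemma pos_scale: "pos_vec x \<Longrightarrow> 0 < t \<Longrightarrow> pos_vec (t *s x)"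
  unfolding pos_vec_def by simp

lemma fcont: "continuous_on {x. pos_vec x} f"
proof -
  have "continuous_on {x. pos_vec x} (\<lambda>x. \<chi> i. f x $ i)"
  proof (rule continuous_on_vec_lambda)
    fix i
    show "continuous_on {x. pos_vec x} (\<lambda>x. f x $ i)"
      unfolding continuous_on_iff
    proof (intro ballI allI impI)
      fix x :: "real^'n" and e :: real
      assume x: "x \<in> {x. pos_vec x}" and e: "0 < e"
      then have px: "pos_vec x" by simp
      define m0 where "m0 = Min (range (\<lambda>j. x $ j))"
      have m0pos: "0 < m0" unfolding m0_def using px by (simp add: pos_vec_def)
      have m0le: "m0 \<le> x $ j" for j unfolding m0_def by simp
      define F where "F = f x $ i + 1"
      have Fpos: "0 < F" unfolding F_def using fpos[OF px, of i] by simp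
      define \<delta> where "\<delta> = min (1/2) (e / (2*F))"
      have dpos: "0 < \<delta>" unfolding \<delta>_def using e Fpos by simp
      have dle: "\<delta> \<le> 1/2" unfolding \<delta>_def by simp
      have "\<delta> \<le> e / (2*F)" unfolding \<delta>_def by simp
      then have dF: "\<delta> * F \<le> e/2" using Fpos by (simp add: pos_le_divide_eq)
      show "\<exists>d>0. \<forall>x'\<in>{x. pos_vec x}. dist x' x < d \<longrightarrow> dist (f x' $ i) (f x $ i) < e"
      proof (intro exI[of _ "\<delta> * m0"] conjI ballI impI)
        show "0 < \<delta> * m0" using dpos m0pos by simp
        fix x' assume x': "x' \<in> {x. pos_vec x}" and dx: "dist x' x < \<delta> * m0"
        have px': "pos_vec x'" using x' by simp
        have cj: "\<bar>x' $ j - x $ j\<bar> < \<delta> * x $ j" for j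
        proof -
          have "\<bar>x' $ j - x $ j\<bar> \<le> dist x' x"
            using component_le_norm_cart[of "x' - x" j] by (simp add: dist_norm)
          also have "\<dots> < \<delta> * m0" by fact
          also have "\<dots> \<le> \<delta> * x $ j" using dpos m0le by simp
          finally show ?thesis .
        qed
        have p1: "pos_vec ((1 - \<delta>) *s x)" by (rule pos_scale[OF px]) (use dle in simp)
        have p2: "pos_vec ((1 + \<delta>) *s x)" by (rule pos_scale[OF px]) (use dpos in simp)
        have lo: "(1 - \<delta>) * f x $ i \<le> f x' $ i"
        proof -
          have "f ((1 - \<delta>) *s x) $ i \<le> f x' $ i"
          proof (rule fmono[OF p1 px'])
            fix j show "((1 - \<delta>) *s x) $ j \<le> x' $ j" using cj[of j] by (simp add: algebra_simps abs_less_iff)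
          qed
          then show ?thesis using fhom[OF px, of "1-\<delta>" i] dle by simp
        qed
        have hi: "f x' $ i \<le> (1 + \<delta>) * f x $ i"
        proof -
          have "f x' $ i \<le> f ((1 + \<delta>) *s x) $ i"
          proof (rule fmono[OF px' p2])
            fix j show "x' $ j \<le> ((1 + \<delta>) *s x) $ j" using cj[of j] by (simp add: algebra_simps abs_less_iff)
          qed
          then show ?thesis using fhom[OF px, of "1+\<delta>" i] dpos by simp
        qed
        have "\<delta> * f x $ i \<le> \<delta> * F" using dpos unfolding F_def by simp
        moreover have "\<bar>f x' $ i - f x $ i\<bar> \<le> \<delta> * f x $ i" using lo hi by (simp add: algebra_simps abs_le_iff)
        ultimately have "\<bar>f x' $ i - f x $ i\<bar> \<le> e/2" using dF by linarith
        then show "dist (f x' $ i) (f x $ i) < e" using e by (simp add: dist_real_def)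
      qed
    qed
  qed
  then show ?thesis by simp
qed


definition mm :: "real^'n \<Rightarrow> real" where
  "mm x = Min (range (\<lambda>i. f x $ i / x $ i))"

lemma mm_le: "mm x \<le> f x $ i / x $ i"
  unfolding mm_def by simp

lemma mm_ex: "\<exists>i. mm x = f x $ i / x $ i"
proof -
  have "mm x \<in> range (\<lambda>i. f x $ i / x $ i)" unfolding mm_def by (rule Min_in) auto
  then show ?thesis by auto
qed

lemma mm_ge: "(\<And>i. c \<le> f x $ i / x $ i) \<Longrightarrow> c \<le> mm x"
  using mm_ex by metis

definition one :: "real^'n" where "one = (\<chi> i. 1)"

lemma one_pos: "pos_vec one" unfolding one_def pos_vec_def by simp

lemma ex_max: "\<exists>k. \<forall>j. (g::'n \<Rightarrow> real) j \<le> g k"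
proof -
  have "Max (range g) \<in> range g" by (rule Max_in) auto
  then obtain k where "Max (range g) = g k" by (metis rangeE)
  then show ?thesis by (metis Max_ge finite UNIV_I finite_imageI image_eqI)
qed

lemma mm_bound: assumes px: "pos_vec x" shows "mm x \<le> Max (range (\<lambda>i. f one $ i))"
proof -
  obtain k where k: "\<forall>j. x $ j \<le> x $ k" using ex_max[of "\<lambda>j. x $ j"] by auto
  have xk: "0 < x $ k" using px by (simp add: pos_vec_def)
  have "f x $ k \<le> f (x $ k *s one) $ k"
    by (rule fmono[OF px pos_scale[OF one_pos xk]]) (use k in \<open>simp add: one_def\<close>)
  also have "\<dots> = x $ k * f one $ k" using fhom[OF one_pos xk] by simp
  finally have "f x $ k / x $ k \<le> f one $ k" using xk by (simp add: divide_le_eq mult.commute)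
  also have "\<dots> \<le> Max (range (\<lambda>i. f one $ i))" by simp
  finally show ?thesis using mm_le[of x k] by linarith
qed

definition lam where "lam = cw_lambda f"

lemma lam_set: "{Min (range (\<lambda>i. f x $ i / x $ i)) | x. pos_vec x} = mm ` {x. pos_vec x}"
  unfolding mm_def by auto

lemma bdd: "bdd_above (mm ` {x. pos_vec x})"
  using mm_bound by (auto intro!: bdd_aboveI)

lemma lam_ge: "pos_vec x \<Longrightarrow> mm x \<le> lam"
  unfolding lam_def cw_lambda_def lam_set by (rule cSUP_upper[OF _ bdd]) simp

lemma lam_approx: "c < lam \<Longrightarrow> \<exists>x. pos_vec x \<and> c < mm x"
  unfolding lam_def cw_lambda_def lam_set
  using less_cSUP_iff[OF _ bdd, of c] one_pos by auto

lemma mm_pos: "pos_vec x \<Longrightarrow> 0 < mm x"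
  using mm_ex[of x] fpos[of x] by (metis divide_pos_pos pos_vec_def)

lemma lam_pos: "0 < lam"
  using lam_ge[OF one_pos] mm_pos[OF one_pos] by simp


definition simp_set :: "(real^'n) set" where
  "simp_set = {u. (\<forall>i. 0 \<le> u $ i) \<and> sum (\<lambda>i. u $ i) UNIV = 1}"

definition xinv :: "real \<Rightarrow> real^'n \<Rightarrow> real^'n" where
  "xinv e u = (\<chi> j. 1 / (u $ j + e))"

definition gg :: "real \<Rightarrow> real^'n \<Rightarrow> 'n \<Rightarrow> real" where
  "gg e u i = 1 / f (xinv e u) $ i"

definition Phi :: "real \<Rightarrow> real^'n \<Rightarrow> real^'n" where
  "Phi e u = (\<chi> i. gg e u i / sum (gg e u) UNIV)"

lemma xinv_pos: "0 < e \<Longrightarrow> u \<in> simp_set \<Longrightarrow> pos_vec (xinv e u)"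
  unfolding xinv_def pos_vec_def simp_set_def by (simp add: add_nonneg_pos)

lemma gg_pos: "0 < e \<Longrightarrow> u \<in> simp_set \<Longrightarrow> 0 < gg e u i"
  unfolding gg_def using fpos[OF xinv_pos] by simp

lemma sum_gg_pos: "0 < e \<Longrightarrow> u \<in> simp_set \<Longrightarrow> 0 < sum (gg e u) UNIV"
  using gg_pos by (simp add: sum_pos)

lemma compact_simp: "compact simp_set"
proof -
  have cl: "closed simp_set"
  proof -
    have "simp_set = {x::real^'n. \<forall>i. 0 \<le> x$i} \<inter> {u. sum (\<lambda>i. u $ i) UNIV = 1}"
      unfolding simp_set_def by auto
    moreover have "closed {u::real^'n. sum (\<lambda>i. u $ i) UNIV = 1}"
      by (intro closed_Collect_eq continuous_intros)
    ultimately show ?thesis using closed_positive_orthant closed_Int by metis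
  qed
  have "simp_set \<subseteq> cbox 0 one"
  proof
    fix u assume u: "u \<in> simp_set"
    have "u $ i \<le> 1" for i
    proof -
      have "u $ i = sum (\<lambda>j. u $ j) {i}" by simp
      also have "\<dots> \<le> sum (\<lambda>j. u $ j) UNIV" by (rule sum_mono2) (use u in \<open>auto simp: simp_set_def\<close>)
      finally show ?thesis using u by (simp add: simp_set_def)
    qed
    then show "u \<in> cbox 0 one" using u by (auto simp: mem_box_cart one_def simp_set_def)
  qed
  then have "bounded simp_set" using bounded_cbox bounded_subset by blast
  then show ?thesis using cl compact_eq_bounded_closed by blast
qed

lemma convex_simp: "convex simp_set"
  unfolding convex_def simp_set_def
  by (auto simp: sum.distrib sum_distrib_left[symmetric])

lemma simp_ne: "simp_set \<noteq> {}"
proof -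
  have "(\<chi> i. 1 / real CARD('n)) \<in> simp_set" unfolding simp_set_def by simp
  then show ?thesis by blast
qed

lemma Phi_cont: assumes e: "0 < e" shows "continuous_on simp_set (Phi e)"
proof -
  have c1: "continuous_on simp_set (xinv e)"
    unfolding xinv_def
    by (intro continuous_on_vec_lambda continuous_intros) (use e in \<open>auto simp: simp_set_def; smt (verit)\<close>)
  have c2: "continuous_on simp_set (\<lambda>u. f (xinv e u))"
    by (rule continuous_on_compose2[OF fcont c1]) (use xinv_pos e in auto)
  have c3: "continuous_on simp_set (\<lambda>u. gg e u i)" for i
    unfolding gg_def
    by (intro continuous_intros c2) (use fpos xinv_pos e in \<open>auto simp: less_le\<close>)
  have c4: "continuous_on simp_set (\<lambda>u. sum (gg e u) UNIV)"
    by (intro continuous_on_sum c3)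
  show ?thesis unfolding Phi_def
    by (intro continuous_on_vec_lambda continuous_on_divide c3 c4) (use sum_gg_pos e in \<open>auto simp: less_le\<close>)
qed

lemma Phi_maps: "0 < e \<Longrightarrow> Phi e \<in> simp_set \<rightarrow> simp_set"
proof
  fix u assume e: "0 < e" and u: "u \<in> simp_set"
  have s: "0 < sum (gg e u) UNIV" by (rule sum_gg_pos[OF e u])
  have "sum (\<lambda>i. gg e u i / sum (gg e u) UNIV) UNIV = 1"
    using s by (simp add: sum_divide_distrib[symmetric])
  then show "Phi e u \<in> simp_set"
    unfolding Phi_def simp_set_def using gg_pos[OF e u] s by (simp add: less_imp_le)
qed

lemma eps_eigen: assumes e: "0 < e"
  shows "\<exists>u \<rho>. u \<in> simp_set \<and> (\<forall>i. 0 < u $ i) \<and> 0 < \<rho> \<and> (\<forall>i. f (xinv e u) $ i = \<rho> / u $ i)"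
proof -
  obtain u where u: "u \<in> simp_set" and fx: "Phi e u = u"
    using brouwer[OF compact_simp convex_simp simp_ne Phi_cont[OF e] Phi_maps[OF e]] by blast
  define s where "s = sum (gg e u) UNIV"
  have s: "0 < s" unfolding s_def by (rule sum_gg_pos[OF e u])
  have ui: "u $ i = gg e u i / s" for i using fx unfolding Phi_def s_def by (metis vec_lambda_beta)
  have up: "0 < u $ i" for i using ui[of i] gg_pos[OF e u, of i] s by simp
  have "f (xinv e u) $ i = (1/s) / u $ i" for i
  proof -
    have "f (xinv e u) $ i = 1 / gg e u i" unfolding gg_def using fpos[OF xinv_pos[OF e u], of i] by simp
    also have "gg e u i = s * u $ i" using ui[of i] s by simp
    finally show ?thesis by simp
  qed
  then show ?thesis using u up s by (intro exI[of _ u] exI[of _ "1/s"]) auto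
qed


lemma rho_le:
  assumes e: "0 < e" and u: "u \<in> simp_set" and up: "\<forall>i. 0 < u $ i"
    and eq: "\<forall>i. f (xinv e u) $ i = \<rho> / u $ i" and rp: "0 < \<rho>"
  shows "\<rho> \<le> lam"
proof -
  have px: "pos_vec (xinv e u)" by (rule xinv_pos[OF e u])
  have "\<rho> \<le> mm (xinv e u)"
  proof (rule mm_ge)
    fix i
    have ui: "0 < u $ i" using up by simp
    have "f (xinv e u) $ i / xinv e u $ i = \<rho> * (u $ i + e) / u $ i"
      using eq ui e by (simp add: xinv_def)
    also have "\<dots> \<ge> \<rho>" using ui e rp by (simp add: le_divide_eq)
    finally show "\<rho> \<le> f (xinv e u) $ i / xinv e u $ i" .
  qed
  also have "\<dots> \<le> lam" by (rule lam_ge[OF px])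
  finally show ?thesis .
qed

definition CC :: "real^'n \<Rightarrow> real" where
  "CC x = sum (\<lambda>j. x $ j) UNIV * sum (\<lambda>j. 1 / x $ j) UNIV"

lemma CC_pos: "pos_vec x \<Longrightarrow> 0 < CC x"
  unfolding CC_def pos_vec_def by (intro mult_pos_pos sum_pos) auto

lemma rho_ge:
  assumes e: "0 < e" and u: "u \<in> simp_set" and up: "\<forall>i. 0 < u $ i"
    and eq: "\<forall>i. f (xinv e u) $ i = \<rho> / u $ i" and rp: "0 < \<rho>"
    and x0: "pos_vec x0"
  shows "mm x0 \<le> (1 + e * CC x0) * \<rho>"
proof -
  have x0p: "0 < x0 $ j" for j using x0 by (simp add: pos_vec_def)
  obtain k where k: "\<forall>j. x0 $ j * u $ j \<le> x0 $ k * u $ k" using ex_max[of "\<lambda>j. x0 $ j * u $ j"] by auto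
  define s where "s = x0 $ k * u $ k"
  have sp: "0 < s" unfolding s_def using x0p up by simp
  define C where "C = CC x0"
  have Cp: "0 < C" unfolding C_def by (rule CC_pos[OF x0])
  have usum: "sum (\<lambda>j. u $ j) UNIV = 1" using u by (simp add: simp_set_def)
  have "1 \<le> s * sum (\<lambda>j. 1 / x0 $ j) UNIV"
  proof -
    have "sum (\<lambda>j. u $ j) UNIV \<le> sum (\<lambda>j. s * (1 / x0 $ j)) UNIV"
    proof (rule sum_mono)
      fix j show "u $ j \<le> s * (1 / x0 $ j)"
        using k[rule_format, of j] x0p[of j] unfolding s_def by (simp add: le_divide_eq mult.commute)
    qed
    then show ?thesis using usum by (simp add: sum_distrib_left)
  qed
  then have xs: "x0 $ j \<le> C * s" for j
  proof -
    assume h: "1 \<le> s * sum (\<lambda>j. 1 / x0 $ j) UNIV"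
    have "x0 $ j = sum (\<lambda>j. x0 $ j) {j}" by simp
    also have "\<dots> \<le> sum (\<lambda>j. x0 $ j) UNIV" by (rule sum_mono2) (use x0p in \<open>auto simp: less_imp_le\<close>)
    finally have a: "x0 $ j \<le> sum (\<lambda>j. x0 $ j) UNIV" .
    have b: "0 \<le> sum (\<lambda>j. x0 $ j) UNIV" using x0p by (simp add: sum_nonneg less_imp_le)
    have "sum (\<lambda>j. x0 $ j) UNIV * 1 \<le> sum (\<lambda>j. x0 $ j) UNIV * (s * sum (\<lambda>j. 1 / x0 $ j) UNIV)"
      by (rule mult_left_mono[OF h b])
    then show ?thesis using a unfolding C_def CC_def by (simp add: algebra_simps)
  qed
  define z where "z = (1 + e * C) *s (s *s xinv e u)"
  have pxi: "pos_vec (xinv e u)" by (rule xinv_pos[OF e u])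
  have p1: "0 < 1 + e * C" using mult_pos_pos[OF e Cp] by linarith
  have pz: "pos_vec z" unfolding z_def by (intro pos_scale pxi sp p1)
  have le: "x0 $ j \<le> z $ j" for j
  proof -
    have uj: "0 < u $ j + e" using up e by (simp add: add_pos_pos)
    have "x0 $ j * (u $ j + e) \<le> (1 + e * C) * s"
    proof -
      have "x0 $ j * u $ j \<le> s" using k unfolding s_def by simp
      moreover have "x0 $ j * e \<le> e * C * s" using xs[of j] e by (simp add: algebra_simps)
      ultimately show ?thesis by (simp add: algebra_simps)
    qed
    then show ?thesis unfolding z_def xinv_def using uj by (simp add: le_divide_eq)
  qed
  have "f x0 $ k \<le> f z $ k" by (rule fmono[OF x0 pz le])
  also have "\<dots> = (1 + e * C) * (s * f (xinv e u) $ k)"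
    unfolding z_def using fhom[OF pos_scale[OF pxi sp] p1] fhom[OF pxi sp] by simp
  also have "\<dots> = (1 + e * C) * \<rho> * x0 $ k"
    using eq up[rule_format, of k] unfolding s_def by (simp add: field_simps)
  finally have "f x0 $ k / x0 $ k \<le> (1 + e * C) * \<rho>" using x0p[of k] by (simp add: divide_le_eq)
  then show ?thesis using mm_le[of x0 k] unfolding C_def by linarith
qed


lemma limit_vec:
  "\<exists>v\<in>simp_set.
     (\<forall>i x. pos_vec x \<longrightarrow> (\<forall>j. x $ j * v $ j \<le> 1) \<longrightarrow> f x $ i * v $ i \<le> lam) \<and>
     (\<forall>i c. c * v $ i < lam \<longrightarrow> (\<exists>x. pos_vec x \<and> (\<forall>j. x $ j * v $ j \<le> 1) \<and> c < f x $ i))"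
proof -
  define ep :: "nat \<Rightarrow> real" where "ep k = 1 / (real k + 1)" for k
  have ep_pos: "0 < ep k" for k unfolding ep_def by simp
  have "\<forall>k. \<exists>u \<rho>. u \<in> simp_set \<and> (\<forall>i. 0 < u $ i) \<and> 0 < \<rho> \<and> (\<forall>i. f (xinv (ep k) u) $ i = \<rho> / u $ i)"
    using eps_eigen[OF ep_pos] by blast
  then obtain U R where UR: "\<And>k. U k \<in> simp_set \<and> (\<forall>i. 0 < U k $ i) \<and> 0 < R k \<and> (\<forall>i. f (xinv (ep k) (U k)) $ i = R k / U k $ i)"
    by metis
  obtain v r where v: "v \<in> simp_set" and r: "strict_mono (r :: nat \<Rightarrow> nat)" and lim: "(U \<circ> r) \<longlonglongrightarrow> v"
    using seq_compactE[OF compact_imp_seq_compact[OF compact_simp], of U] UR by blast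
  define u where "u k = U (r k)" for k
  define e where "e k = ep (r k)" for k
  define \<rho> where "\<rho> k = R (r k)" for k
  have e_pos: "0 < e k" for k unfolding e_def by (rule ep_pos)
  have u_in: "u k \<in> simp_set" for k unfolding u_def using UR by blast
  have u_pos: "0 < u k $ i" for k i unfolding u_def using UR by blast
  have rho_pos: "0 < \<rho> k" for k unfolding \<rho>_def using UR by blast
  have eq: "\<forall>i. f (xinv (e k) (u k)) $ i = \<rho> k / u k $ i" for k unfolding \<rho>_def e_def u_def using UR by blast
  have rl: "\<rho> k \<le> lam" for k by (rule rho_le[OF e_pos u_in]) (use u_pos eq rho_pos in auto)
  have rg: "pos_vec x0 \<Longrightarrow> mm x0 \<le> (1 + e k * CC x0) * \<rho> k" for k x0
    by (rule rho_ge[OF e_pos u_in]) (use u_pos eq rho_pos in auto)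
  have ulim: "(\<lambda>k. u k $ j) \<longlonglongrightarrow> v $ j" for j
    using tendsto_vec_nth[OF lim, of j] unfolding u_def by (simp add: o_def)
  have elim: "e \<longlonglongrightarrow> 0"
  proof (rule tendsto_sandwich[of "\<lambda>_. 0" _ _ "\<lambda>k. inverse (real (Suc k))"])
    show "\<forall>\<^sub>F k in sequentially. 0 \<le> e k" using e_pos by (simp add: less_imp_le)
    show "\<forall>\<^sub>F k in sequentially. e k \<le> inverse (real (Suc k))"
    proof (rule always_eventually, rule allI)
      fix k
      have "k \<le> r k" by (rule seq_suble[OF r])
      then show "e k \<le> inverse (real (Suc k))"
        unfolding e_def ep_def by (simp add: divide_simps inverse_eq_divide)
    qed
  qed (rule tendsto_const, rule LIMSEQ_inverse_real_of_nat)
  have part1: "f x $ i * v $ i \<le> lam" if px: "pos_vec x" and cx: "\<forall>j. x $ j * v $ j \<le> 1" for i x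
  proof -
    define M where "M = sum (\<lambda>j. x $ j) UNIV"
    have xp: "0 < x $ j" for j using px by (simp add: pos_vec_def)
    have Mp: "0 < M" unfolding M_def using xp by (simp add: sum_pos)
    have xM: "x $ j \<le> M" for j
    proof -
      have "x $ j = sum (\<lambda>j. x $ j) {j}" by simp
      also have "\<dots> \<le> M" unfolding M_def by (rule sum_mono2) (use xp in \<open>auto simp: less_imp_le\<close>)
      finally show ?thesis .
    qed
    have step: "f x $ i * v $ i \<le> (1 + \<eta> * M) * lam" if \<eta>: "0 < \<eta>" for \<eta>
    proof (rule tendsto_upperbound)
      show "(\<lambda>k. f x $ i * u k $ i) \<longlonglongrightarrow> f x $ i * v $ i" by (intro tendsto_intros ulim)
      have "\<forall>\<^sub>F k in sequentially. \<forall>j. u k $ j + e k < v $ j + \<eta>"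
      proof (rule eventually_all_finite)
        fix j
        have "(\<lambda>k. u k $ j + e k) \<longlonglongrightarrow> v $ j + 0" by (intro tendsto_intros ulim elim)
        then show "\<forall>\<^sub>F k in sequentially. u k $ j + e k < v $ j + \<eta>"
          by (rule order_tendstoD(2)) (use \<eta> in simp)
      qed
      then show "\<forall>\<^sub>F k in sequentially. f x $ i * u k $ i \<le> (1 + \<eta> * M) * lam"
      proof (rule eventually_mono)
        fix k assume hk: "\<forall>j. u k $ j + e k < v $ j + \<eta>"
        have p1: "0 < 1 + \<eta> * M" using mult_pos_pos[OF \<eta> Mp] by linarith
        define x' where "x' = (1 / (1 + \<eta> * M)) *s x"
        have px': "pos_vec x'" unfolding x'_def by (rule pos_scale[OF px]) (use p1 in simp)
        have le: "x' $ j \<le> xinv (e k) (u k) $ j" for j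
        proof -
          have uj: "0 < u k $ j + e k" using u_pos[of k j] e_pos[of k] by simp
          have "x $ j * (u k $ j + e k) \<le> x $ j * (v $ j + \<eta>)"
            using hk xp[of j] by (simp add: less_imp_le)
          also have "\<dots> = x $ j * v $ j + \<eta> * x $ j" by (simp add: algebra_simps)
          also have "\<dots> \<le> 1 + \<eta> * M" using cx xM[of j] \<eta> by (smt (verit) mult_left_mono)
          finally show ?thesis unfolding x'_def xinv_def using uj p1
            by (simp add: divide_simps mult.commute)
        qed
        have "f x' $ i \<le> f (xinv (e k) (u k)) $ i"
          by (rule fmono[OF px' xinv_pos[OF e_pos u_in] le])
        also have "\<dots> = \<rho> k / u k $ i" using eq by simp
        finally have "f x $ i / (1 + \<eta> * M) \<le> \<rho> k / u k $ i"
          unfolding x'_def using fhom[OF px, of "1 / (1 + \<eta> * M)" i] p1 by simp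
        then have "f x $ i * u k $ i \<le> (1 + \<eta> * M) * \<rho> k"
          using p1 u_pos[of k i] by (simp add: divide_simps mult.commute)
        also have "\<dots> \<le> (1 + \<eta> * M) * lam" using rl[of k] p1 by simp
        finally show "f x $ i * u k $ i \<le> (1 + \<eta> * M) * lam" .
      qed
    qed simp
    show ?thesis
    proof (rule field_le_epsilon)
      fix d :: real assume d: "0 < d"
      have lp: "0 < lam" by (rule lam_pos)
      have "f x $ i * v $ i \<le> (1 + (d / (M * lam)) * M) * lam" by (rule step) (use d Mp lp in simp)
      also have "\<dots> = lam + d" using Mp lp by (simp add: field_simps)
      finally show "f x $ i * v $ i \<le> lam + d" .
    qed
  qed
  have part2: "\<exists>x. pos_vec x \<and> (\<forall>j. x $ j * v $ j \<le> 1) \<and> c < f x $ i" if cv: "c * v $ i < lam" for i c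
  proof (cases "c \<le> 0")
    case True
    define t where "t = 1 / (1 + sum (\<lambda>j. v $ j) UNIV)"
    have vs: "sum (\<lambda>j. v $ j) UNIV = 1" and v0: "0 \<le> v $ j" for j using v by (auto simp: simp_set_def)
    have tp: "0 < t" unfolding t_def using vs by simp
    have "pos_vec (t *s one)" by (rule pos_scale[OF one_pos tp])
    moreover have "(t *s one) $ j * v $ j \<le> 1" for j
    proof -
      have "v $ j \<le> 1"
      proof -
        have "v $ j = sum (\<lambda>j. v $ j) {j}" by simp
        also have "\<dots> \<le> 1" unfolding vs[symmetric] by (rule sum_mono2) (use v0 in auto)
        finally show ?thesis .
      qed
      then show ?thesis unfolding t_def one_def using vs v0[of j] by simp
    qed
    moreover have "c < f (t *s one) $ i" using fpos[OF \<open>pos_vec (t *s one)\<close>, of i] True by simp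
    ultimately show ?thesis by blast
  next
    case False
    then have cp: "0 < c" by simp
    define a where "a = c * v $ i"
    have v0: "0 \<le> v $ j" for j using v by (auto simp: simp_set_def)
    have a0: "0 \<le> a" unfolding a_def using cp v0[of i] by simp
    have al: "a < lam" unfolding a_def by (rule cv)
    define b1 where "b1 = (a + lam) / 2"
    have ab: "a < b1" "b1 < lam" unfolding b1_def using al by auto
    obtain x0 where px0: "pos_vec x0" and bx0: "b1 < mm x0" using lam_approx[OF ab(2)] by blast
    define \<delta> where "\<delta> = (b1 - a) / (2 * (a + 1))"
    have dp: "0 < \<delta>" unfolding \<delta>_def using ab a0 by simp
    have ad: "a * (1 + \<delta>) < b1"
    proof -
      have "a * \<delta> \<le> (a + 1) * \<delta>" using dp by simp
      also have "(a + 1) * \<delta> = (b1 - a) / 2" unfolding \<delta>_def using a0 by (simp add: field_simps)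
      finally show ?thesis using ab by (simp add: algebra_simps)
    qed
    have ev1: "\<forall>\<^sub>F k in sequentially. \<forall>j. v $ j < (1 + \<delta>) * (u k $ j + e k)"
    proof (rule eventually_all_finite)
      fix j
      show "\<forall>\<^sub>F k in sequentially. v $ j < (1 + \<delta>) * (u k $ j + e k)"
      proof (cases "v $ j = 0")
        case True
        then show ?thesis using u_pos e_pos dp
          by (intro always_eventually allI) (simp add: add_pos_pos)
      next
        case False
        then have vp: "0 < v $ j" using v0[of j] by simp
        have "(\<lambda>k. (1 + \<delta>) * (u k $ j + e k)) \<longlonglongrightarrow> (1 + \<delta>) * (v $ j + 0)"
          by (intro tendsto_intros ulim elim)
        then show ?thesis by (rule order_tendstoD(1)) (use vp dp in simp)
      qed
    qed
    have ev2: "\<forall>\<^sub>F k in sequentially. c * (1 + \<delta>) * u k $ i < b1"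
    proof -
      have "(\<lambda>k. c * (1 + \<delta>) * u k $ i) \<longlonglongrightarrow> c * (1 + \<delta>) * v $ i"
        by (intro tendsto_intros ulim)
      then show ?thesis by (rule order_tendstoD(2)) (use ad in \<open>simp add: a_def algebra_simps\<close>)
    qed
    have ev3: "\<forall>\<^sub>F k in sequentially. b1 < \<rho> k"
    proof -
      have Cp: "0 < CC x0" by (rule CC_pos[OF px0])
      have "(\<lambda>k. mm x0 / (1 + e k * CC x0)) \<longlonglongrightarrow> mm x0 / (1 + 0 * CC x0)"
        by (intro tendsto_intros elim) simp
      then have "\<forall>\<^sub>F k in sequentially. b1 < mm x0 / (1 + e k * CC x0)"
        by (rule order_tendstoD(1)) (use bx0 in simp)
      then show ?thesis
      proof (rule eventually_mono)
        fix k assume h: "b1 < mm x0 / (1 + e k * CC x0)"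
        have p: "0 < 1 + e k * CC x0" using mult_pos_pos[OF e_pos[of k] Cp] by linarith
        have "mm x0 / (1 + e k * CC x0) \<le> \<rho> k" using rg[OF px0, of k] p by (simp add: divide_le_eq mult.commute)
        then show "b1 < \<rho> k" using h by linarith
      qed
    qed
    obtain k where k1: "\<forall>j. v $ j < (1 + \<delta>) * (u k $ j + e k)" and k2: "c * (1 + \<delta>) * u k $ i < b1"
      and k3: "b1 < \<rho> k"
      using eventually_happens'[OF _ eventually_conj[OF ev1 eventually_conj[OF ev2 ev3]]] by auto
    define x where "x = (1 / (1 + \<delta>)) *s xinv (e k) (u k)"
    have pxi: "pos_vec (xinv (e k) (u k))" by (rule xinv_pos[OF e_pos u_in])
    have px: "pos_vec x" unfolding x_def by (rule pos_scale[OF pxi]) (use dp in simp)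
    have cx: "x $ j * v $ j \<le> 1" for j
    proof -
      have uj: "0 < u k $ j + e k" using u_pos[of k j] e_pos[of k] by simp
      show ?thesis unfolding x_def xinv_def using k1[rule_format, of j] uj dp
        by (simp add: divide_simps)
    qed
    have "f x $ i = \<rho> k / ((1 + \<delta>) * u k $ i)"
      unfolding x_def using fhom[OF pxi, of "1 / (1 + \<delta>)" i] eq[of k] dp by simp
    moreover have "c < \<rho> k / ((1 + \<delta>) * u k $ i)"
    proof -
      have pu: "0 < (1 + \<delta>) * u k $ i" using u_pos[of k i] dp by simp
      have "c * ((1 + \<delta>) * u k $ i) < \<rho> k" using k2 k3 by (simp add: mult.assoc)
      then show ?thesis by (simp add: pos_less_divide_eq[OF pu])
    qed
    ultimately show ?thesis using px cx by auto
  qed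
  show ?thesis using v part1 part2 by blast
qed

end

theorem corollary2p7:
  fixes f :: "real ^ 'n::finite \<Rightarrow> real ^ 'n"
  assumes "maps_pos f" and "order_preserving f" and "homogeneous f"
  shows "\<exists>y :: ereal ^ 'n. (\<forall>i. 0 < y $ i) \<and> (\<exists>i. y $ i < \<infinity>) \<and>
           ext_map f y = (\<chi> i. ereal (cw_lambda f) * y $ i)"
proof -
  interpret ophom f using assms by unfold_locales
  obtain v where v: "v \<in> simp_set"
    and P1: "\<And>i x. pos_vec x \<Longrightarrow> (\<forall>j. x $ j * v $ j \<le> 1) \<Longrightarrow> f x $ i * v $ i \<le> lam"
    and P2: "\<And>i c. c * v $ i < lam \<Longrightarrow> \<exists>x. pos_vec x \<and> (\<forall>j. x $ j * v $ j \<le> 1) \<and> c < f x $ i"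
    using limit_vec by blast
  have lp: "0 < lam" by (rule lam_pos)
  have v0: "0 \<le> v $ j" for j using v by (auto simp: simp_set_def)
  have vs: "sum (\<lambda>j. v $ j) UNIV = 1" using v by (auto simp: simp_set_def)
  define y :: "ereal^'n" where "y = (\<chi> i. if v $ i = 0 then \<infinity> else ereal (1 / v $ i))"
  have ypos: "\<forall>i. 0 < y $ i"
  proof
    fix i show "0 < y $ i" unfolding y_def using v0[of i] by auto
  qed
  have yfin: "\<exists>i. y $ i < \<infinity>"
  proof (rule ccontr)
    assume nf: "\<not> (\<exists>i. y $ i < \<infinity>)"
    have "v $ i = 0" for i
    proof (rule ccontr)
      assume "v $ i \<noteq> 0"
      then have "y $ i < \<infinity>" unfolding y_def by simp
      with nf show False by blast
    qed
    then have "sum (\<lambda>j. v $ j) UNIV = 0" by simp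
    then show False using vs by simp
  qed
  have Xeq: "{x. pos_vec x \<and> (\<forall>j. ereal (x $ j) \<le> y $ j)} = {x. pos_vec x \<and> (\<forall>j. x $ j * v $ j \<le> 1)}"
  proof -
    have "ereal (x $ j) \<le> y $ j \<longleftrightarrow> x $ j * v $ j \<le> 1" for x j
    proof (cases "v $ j = 0")
      case True then show ?thesis unfolding y_def by simp
    next
      case False
      then have "0 < v $ j" using v0[of j] by simp
      then show ?thesis unfolding y_def using False by (simp add: le_divide_eq)
    qed
    then show ?thesis by auto
  qed
  have ex0: "\<exists>x. pos_vec x \<and> (\<forall>j. x $ j * v $ j \<le> 1)" using P2[of 0] lp by auto
  have "ext_map f y $ i = ereal lam * y $ i" for i
  proof -
    have E: "ext_map f y $ i = (SUP x\<in>{x. pos_vec x \<and> (\<forall>j. x $ j * v $ j \<le> 1)}. ereal (f x $ i))"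
      unfolding ext_map_def Xeq by simp
    show ?thesis
    proof (cases "v $ i = 0")
      case True
      have "(SUP x\<in>{x. pos_vec x \<and> (\<forall>j. x $ j * v $ j \<le> 1)}. ereal (f x $ i)) = top"
        unfolding SUP_eq_top_iff
      proof (intro allI impI)
        fix z :: ereal assume "z < top"
        then show "\<exists>x\<in>{x. pos_vec x \<and> (\<forall>j. x $ j * v $ j \<le> 1)}. z < ereal (f x $ i)"
        proof (cases z rule: ereal_cases)
          case (real c)
          then show ?thesis using P2[of c i] True lp by auto
        next
          case MInf then show ?thesis using ex0 by auto
        qed auto
      qed
      then have S: "(SUP x\<in>{x. pos_vec x \<and> (\<forall>j. x $ j * v $ j \<le> 1)}. ereal (f x $ i)) = \<infinity>"
        by (simp only: top_ereal_def)
      show ?thesis unfolding E S using True lp by (simp add: y_def)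
    next
      case False
      then have vp: "0 < v $ i" using v0[of i] by simp
      have R: "ereal lam * y $ i = ereal (lam / v $ i)" unfolding y_def using False by simp
      have "(SUP x\<in>{x. pos_vec x \<and> (\<forall>j. x $ j * v $ j \<le> 1)}. ereal (f x $ i)) = ereal (lam / v $ i)"
      proof (rule antisym)
        show "(SUP x\<in>{x. pos_vec x \<and> (\<forall>j. x $ j * v $ j \<le> 1)}. ereal (f x $ i)) \<le> ereal (lam / v $ i)"
        proof (rule SUP_least)
          fix x assume "x \<in> {x. pos_vec x \<and> (\<forall>j. x $ j * v $ j \<le> 1)}"
          then have "f x $ i * v $ i \<le> lam" using P1 by blast
          then show "ereal (f x $ i) \<le> ereal (lam / v $ i)" using vp by (simp add: le_divide_eq)
        qed
        show "ereal (lam / v $ i) \<le> (SUP x\<in>{x. pos_vec x \<and> (\<forall>j. x $ j * v $ j \<le> 1)}. ereal (f x $ i))"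
          unfolding le_SUP_iff
        proof (intro allI impI)
          fix z :: ereal assume z: "z < ereal (lam / v $ i)"
          then show "\<exists>x\<in>{x. pos_vec x \<and> (\<forall>j. x $ j * v $ j \<le> 1)}. z < ereal (f x $ i)"
          proof (cases z rule: ereal_cases)
            case (real c)
            then have "c * v $ i < lam" using z vp by (simp add: less_divide_eq)
            then show ?thesis using P2[of c i] real by auto
          next
            case MInf then show ?thesis using ex0 by auto
          qed (use z in auto)
        qed
      qed
      then show ?thesis using E R by simp
    qed
  qed
  then have "ext_map f y = (\<chi> i. ereal (cw_lambda f) * y $ i)"
    unfolding lam_def by (simp add: vec_eq_iff)
  then show ?thesis using ypos yfin by blast
qed

end
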